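(* Fix parameters $\alpha\in[0,1)$, $\beta\ge 0$, $q>0$, a positive function $u(t)>0$ (the study-session intensity), a constant $d>0$ with $d\neq 1$, and arbitrary constants $c_1,c_2\in\mathbb{R}$. For state variables $m\in[0,1]$, $n>0$, $\Delta\ge 0$ and time $t$, set $$B_d(m)=c_2\frac{\log d}{-m^2+2m-d}-c_2\frac{\log d}{1-d}+c_1\, m\log\!\Big(\frac{1+\beta}{1-\alpha}\Big)-c_1\log(1+\beta),$$ $$g_d(m,n)=\sqrt{\tfrac{u(t)}{2}}\,\big[B_d(m)\big]_+,\qquad h_d(m,n,\Delta)=-\sqrt{q}\,\frac{m\,n}{1+\Delta}\,c_2\,\frac{(-2m+2)\log d}{(-m^2+2m-d)^2},$$ and define the loss $$\ell_d(m,n,\Delta,p)=h_d(m,n,\Delta)+g_d^2(m,n)+\tfrac12\, q\, p^2 u(t).$$ Let $$J_d(m,n,\Delta,t)=\sqrt{q}\Big(c_1\log n+c_2\frac{\log d}{-m^2+2m-d}\Big).$$ Then $\partial J_d/\partial t=0$, $\partial J_d/\partial \Delta=0$, $\partial J_d/\partial m=-\sqrt{q}\,c_2\frac{(-2m+2)\log d}{(-m^2+2m-d)^2}$, and at every point $(m,n,\Delta,t)$ with $m\in[0,1]$, $n>0$, $\Delta\ge0$ and $-m^2+2m-d\neq 0$, the function $J=J_d$ satisfies the Hamilton–Jacobi–Bellman equation $$0=J_t(m,n,\Delta,t)-\frac{n\,m}{1+\Delta}J_m(m,n,\Delta,t)+J_\Delta(m,n,\Delta,t)+\min_{p\ge 0}\Big\{\ell_d(m,n,\Delta,p)+\big[J(1,(1-\alpha)n,0,t)\,m+J(1,(1+\beta)n,0,t)\,(1-m)-J(m,n,\Delta,t)\big]\,p\,u(t)\Big\},$$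 and the minimizing (optimal) selection probability is $$p^*_d=q^{-1/2}\big[B_d(m)\big]_+ .$$
   Context: This arises from a stochastic optimal control model of a learner reviewing one question: $m$ is the probability of recalling the answer, $n$ is the forgetting rate, $\Delta$ is the time since the last review, $p$ is the probability that the question is selected in a study session, and $u(t)$ is the (given, uncontrolled) rate of study sessions. At a review, the state jumps to $m=1$, $\Delta=0$, and $n\mapsto(1-\alpha)n$ on a successful recall (probability $m$) or $n\mapsto(1+\beta)n$ on an unsuccessful recall (probability $1-m$); between reviews $dm=-\frac{nm}{1+\Delta}dt$ and $d\Delta=dt$. Notation: $[x]_+=\max(x,0)$; $J_t,J_m,J_\Delta$ denote partial derivatives of $J$ with respect to $t,m,\Delta$. *)

theory Defs
  imports "HOL-Analysis.Analysis"
begin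

definition den :: "real \<Rightarrow> real \<Rightarrow> real" where
  "den d m = - (m^2) + 2*m - d"

definition Bd :: "real \<Rightarrow> real \<Rightarrow> real \<Rightarrow> real \<Rightarrow> real \<Rightarrow> real \<Rightarrow> real" where
  "Bd \<alpha> \<beta> d c1 c2 m =
     c2 * ln d / den d m - c2 * ln d / (1 - d)
     + c1 * m * ln ((1 + \<beta>) / (1 - \<alpha>)) - c1 * ln (1 + \<beta>)"

definition gd :: "real \<Rightarrow> real \<Rightarrow> (real \<Rightarrow> real) \<Rightarrow> real \<Rightarrow> real \<Rightarrow> real \<Rightarrow> real
                   \<Rightarrow> real \<Rightarrow> real \<Rightarrow> real" where
  "gd \<alpha> \<beta> u d c1 c2 m n t = sqrt (u t / 2) * max (Bd \<alpha> \<beta> d c1 c2 m) 0"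

definition hd :: "real \<Rightarrow> real \<Rightarrow> real \<Rightarrow> real \<Rightarrow> real \<Rightarrow> real \<Rightarrow> real" where
  "hd q d c2 m n \<Delta> =
     - sqrt q * (m * n / (1 + \<Delta>)) * c2 * ((- 2 * m + 2) * ln d / (den d m)^2)"

definition lossd :: "real \<Rightarrow> real \<Rightarrow> real \<Rightarrow> (real \<Rightarrow> real) \<Rightarrow> real \<Rightarrow> real \<Rightarrow> real
                      \<Rightarrow> real \<Rightarrow> real \<Rightarrow> real \<Rightarrow> real \<Rightarrow> real \<Rightarrow> real" where
  "lossd \<alpha> \<beta> q u d c1 c2 m n \<Delta> p t =
     hd q d c2 m n \<Delta> + (gd \<alpha> \<beta> u d c1 c2 m n t)^2 + 1/2 * q * p^2 * u t"

definition Jd :: "real \<Rightarrow> real \<Rightarrow> real \<Rightarrow> real \<Rightarrow> real \<Rightarrow> real \<Rightarrow> real \<Rightarrow> real \<Rightarrow> real" where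
  "Jd q d c1 c2 m n \<Delta> t = sqrt q * (c1 * ln n + c2 * ln d / den d m)"

end

theory Submission
  imports Defs
begin

lemma J_dm:
  assumes "den d m \<noteq> 0"
  shows "((\<lambda>m'. Jd q d c1 c2 m' n \<Delta> t) has_real_derivative
            (- sqrt q * c2 * ((- 2 * m + 2) * ln d / (den d m)^2))) (at m)"
proof -
  have "((\<lambda>m'. sqrt q * (c1 * ln n + c2 * ln d / (- (m'^2) + 2*m' - d))) has_real_derivative
     sqrt q * (0 + - (c2 * ln d) * (- (2 * m ^ 1 * 1) + 2 * 1 - 0) / ((- (m^2) + 2*m - d))^2)) (at m)"
    using assms unfolding den_def
    by (intro derivative_eq_intros) (auto simp: power2_eq_square)
  then show ?thesis unfolding Jd_def den_def
    by (simp add: algebra_simps)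
qed

theorem lemma2:
  fixes \<alpha> \<beta> q d c1 c2 :: real and u :: "real \<Rightarrow> real"
  assumes "0 \<le> \<alpha>" "\<alpha> < 1" "0 \<le> \<beta>" "0 < q" "\<And>t. 0 < u t"
    and "0 < d" "d \<noteq> 1"
  defines "J \<equiv> Jd q d c1 c2"
  shows "(\<forall>m n \<Delta> t. ((\<lambda>t'. J m n \<Delta> t') has_real_derivative 0) (at t))
    \<and> (\<forall>m n \<Delta> t. ((\<lambda>\<Delta>'. J m n \<Delta>' t) has_real_derivative 0) (at \<Delta>))
    \<and> (\<forall>m n \<Delta> t. den d m \<noteq> 0 \<longrightarrow>
         ((\<lambda>m'. J m' n \<Delta> t) has_real_derivative
            (- sqrt q * c2 * ((- 2 * m + 2) * ln d / (den d m)^2))) (at m))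
    \<and> (\<forall>m n \<Delta> t. 0 \<le> m \<and> m \<le> 1 \<and> 0 < n \<and> 0 \<le> \<Delta> \<and> den d m \<noteq> 0 \<longrightarrow>
        (let F = (\<lambda>p. lossd \<alpha> \<beta> q u d c1 c2 m n \<Delta> p t
                   + (J 1 ((1 - \<alpha>) * n) 0 t * m + J 1 ((1 + \<beta>) * n) 0 t * (1 - m)
                      - J m n \<Delta> t) * p * u t);
             pstar = (1 / sqrt q) * max (Bd \<alpha> \<beta> d c1 c2 m) 0
         in 0 = deriv (\<lambda>t'. J m n \<Delta> t') t
                - n * m / (1 + \<Delta>) * deriv (\<lambda>m'. J m' n \<Delta> t) m
                + deriv (\<lambda>\<Delta>'. J m n \<Delta>' t) \<Delta>
                + (INF p\<in>{0..}. F p)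
          \<and> 0 \<le> pstar \<and> F pstar = (INF p\<in>{0..}. F p)
          \<and> (\<forall>p\<ge>0. F pstar \<le> F p)
          \<and> (\<forall>p\<ge>0. F p = F pstar \<longrightarrow> p = pstar)))"
proof (intro conjI allI impI)
  fix m n \<Delta> t :: real
  show "((\<lambda>t'. J m n \<Delta> t') has_real_derivative 0) (at t)"
    unfolding J_def Jd_def by simp
  show "((\<lambda>\<Delta>'. J m n \<Delta>' t) has_real_derivative 0) (at \<Delta>)"
    unfolding J_def Jd_def by simp
next
  fix m n \<Delta> t :: real
  assume "den d m \<noteq> 0"
  then show "((\<lambda>m'. J m' n \<Delta> t) has_real_derivative
            (- sqrt q * c2 * ((- 2 * m + 2) * ln d / (den d m)^2))) (at m)"
    unfolding J_def by (rule J_dm)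
next
  fix m n \<Delta> t :: real
  assume H: "0 \<le> m \<and> m \<le> 1 \<and> 0 < n \<and> 0 \<le> \<Delta> \<and> den d m \<noteq> 0"
  define F where "F = (\<lambda>p. lossd \<alpha> \<beta> q u d c1 c2 m n \<Delta> p t
                   + (J 1 ((1 - \<alpha>) * n) 0 t * m + J 1 ((1 + \<beta>) * n) 0 t * (1 - m)
                      - J m n \<Delta> t) * p * u t)"
  define pstar where "pstar = (1 / sqrt q) * max (Bd \<alpha> \<beta> d c1 c2 m) 0"
  define s where "s = sqrt q"
  define B where "B = Bd \<alpha> \<beta> d c1 c2 m"
  define Bp where "Bp = max B 0"
  define h where "h = hd q d c2 m n \<Delta>"
  have s: "s > 0" "s^2 = q" using assms(4) by (auto simp: s_def)
  have u: "u t > 0" using assms(5) by auto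
  have d1: "den d 1 = 1 - d" by (simp add: den_def)
  have d1': "1 - d \<noteq> 0" using assms(7) by simp
  have lnb: "ln ((1 + \<beta>) / (1 - \<alpha>)) = ln (1 + \<beta>) - ln (1 - \<alpha>)"
    using assms(1-3) by (simp add: ln_div)
  have lnn1: "ln ((1 - \<alpha>) * n) = ln (1 - \<alpha>) + ln n" using assms(2) H by (simp add: ln_mult)
  have lnn2: "ln ((1 + \<beta>) * n) = ln (1 + \<beta>) + ln n" using assms(3) H by (simp add: ln_mult)
  have K: "J 1 ((1 - \<alpha>) * n) 0 t * m + J 1 ((1 + \<beta>) * n) 0 t * (1 - m) - J m n \<Delta> t = - s * B"
    unfolding J_def Jd_def B_def Bd_def d1 lnb lnn1 lnn2 s_def
    using d1' by (simp add: algebra_simps add_divide_distrib[symmetric])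
  have g2: "(gd \<alpha> \<beta> u d c1 c2 m n t)^2 = u t / 2 * Bp^2"
    unfolding gd_def Bp_def B_def using u by (simp add: power_mult_distrib)
  have Fp: "F p = h + u t / 2 * ((s * p - Bp)^2 + 2 * s * p * (Bp - B))" for p
    unfolding F_def lossd_def K g2 h_def[symmetric] using s
    by (simp add: algebra_simps power2_eq_square)
  have ps: "s * pstar = Bp" unfolding pstar_def s_def Bp_def B_def using s by (simp add: s_def)
  have ps0: "0 \<le> pstar" unfolding pstar_def using s by (simp add: s_def)
  have Fps: "F pstar = h"
  proof -
    have "pstar * (Bp - B) = 0"
      using ps s by (cases "B \<ge> 0") (auto simp: Bp_def)
    then have "2 * s * pstar * (Bp - B) = 0" by simp
    moreover have "(s * pstar - Bp)^2 = 0" using ps by simp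
    ultimately show ?thesis using Fp[of pstar] by simp
  qed
  have ge: "F p \<ge> h" if "p \<ge> 0" for p
  proof -
    have "0 \<le> (s * p - Bp)^2 + 2 * s * p * (Bp - B)"
      using s that by (intro add_nonneg_nonneg) (auto simp: Bp_def)
    then show ?thesis using Fp[of p] u by simp
  qed
  have uniq: "p = pstar" if "p \<ge> 0" "F p = F pstar" for p
  proof -
    have a: "0 \<le> 2 * s * p * (Bp - B)" using s that by (auto simp: Bp_def)
    have "F p = h" using that(2) Fps by (rule trans)
    then have "u t / 2 * ((s * p - Bp)^2 + 2 * s * p * (Bp - B)) = 0" using Fp[of p] by linarith
    then have "(s * p - Bp)^2 + 2 * s * p * (Bp - B) = 0" using u by simp
    moreover have "0 \<le> (s * p - Bp)^2" by simp
    ultimately have "(s * p - Bp)^2 = 0" using a by linarith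
    then have "s * p = s * pstar" unfolding ps by simp
    then show ?thesis using s by simp
  qed
  have INF: "(INF p\<in>{0..}. F p) = h"
    unfolding Fps[symmetric]
    by (rule cInf_eq_minimum) (use ps0 ge Fps in auto)
  have dt: "deriv (\<lambda>t'. J m n \<Delta> t') t = 0" unfolding J_def Jd_def by simp
  have dD: "deriv (\<lambda>\<Delta>'. J m n \<Delta>' t) \<Delta> = 0" unfolding J_def Jd_def by simp
  have dm: "deriv (\<lambda>m'. J m' n \<Delta> t) m = - sqrt q * c2 * ((- 2 * m + 2) * ln d / (den d m)^2)"
    unfolding J_def using J_dm H by (intro DERIV_imp_deriv) auto
  have hjb: "0 = deriv (\<lambda>t'. J m n \<Delta> t') t
                - n * m / (1 + \<Delta>) * deriv (\<lambda>m'. J m' n \<Delta> t) m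
                + deriv (\<lambda>\<Delta>'. J m n \<Delta>' t) \<Delta>
                + (INF p\<in>{0..}. F p)"
    unfolding dt dD dm INF h_def hd_def by (simp add: algebra_simps)
  show "let F = F; pstar = pstar in
         0 = deriv (\<lambda>t'. J m n \<Delta> t') t
                - n * m / (1 + \<Delta>) * deriv (\<lambda>m'. J m' n \<Delta> t) m
                + deriv (\<lambda>\<Delta>'. J m n \<Delta>' t) \<Delta>
                + (INF p\<in>{0..}. F p)
          \<and> 0 \<le> pstar \<and> F pstar = (INF p\<in>{0..}. F p)
          \<and> (\<forall>p\<ge>0. F pstar \<le> F p)
          \<and> (\<forall>p\<ge>0. F p = F pstar \<longrightarrow> p = pstar)"
    unfolding Let_def using hjb ps0 INF ge uniq unfolding Fps by blast
qed

end
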